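(* Let $(M,g)$ be a super generalized recurrent manifold with associated 1-forms $\Pi,\Phi,\Psi,\Theta$, i.e. $$\nabla R = \Pi \otimes R + \Phi \otimes S\wedge S + \Psi \otimes g\wedge S + \Theta \otimes g\wedge g .$$ Then the associated 1-forms are linearly dependent with $d\kappa$, namely $$d\kappa = \kappa\, \Pi + 2(\kappa^2 - \kappa^{(2)})\, \Phi + 2(n-1)\left[\kappa\, \Psi + n\, \Theta\right],$$ where $\kappa^{(2)}=\mathrm{Tr}(S^2)$.
   Context: $(M,g)$ is a connected semi-Riemannian manifold of dimension $n\ge 3$ with Levi-Civita connection $\nabla$, curvature $(0,4)$-tensor $R$, Ricci tensor $S$ and scalar curvature $\kappa$, with $S(X,Y)=\sum_i \varepsilon_i R(e_i,X,Y,e_i)$ for a local orthonormal frame $\{e_i\}$, $\varepsilon_i=g(e_i,e_i)$. The Ricci operator $\mathscr S$ is defined by $g(\mathscr S X,Y)=S(X,Y)$ and $S^2(X,Y)=S(\mathscr S X,Y)$. For symmetric $(0,2)$-tensors $A,E$, $(A\wedge E)(X_1,X_2,Y_1,Y_2)=A(X_1,Y_2)E(X_2,Y_1)+A(X_2,Y_1)E(X_1,Y_2)-A(X_1,Y_1)E(X_2,Y_2)-A(X_2,Y_2)E(X_1,Y_1)$. $(\Pi\otimes T)(X,X_1,\dots)=\Pi(X)T(X_1,\dots)$ and $(\nabla T)(X,X_1,\dots)=(\nabla_XT)(X_1,\dots)$. A super generalized recurrent manifold ($SGK_n$) is one where the displayed identity holds on the set of points where $\nabla R-\xi\otimes R-\zeta\otimes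 S\wedge S-\theta\otimes g\wedge S\neq0$ for all 1-forms $\xi,\zeta,\theta$. *)

theory Defs
  imports "HOL-Analysis.Analysis"
begin

text \<open>Local coordinate description of a semi-Riemannian metric on an open
connected chart domain U of the space with coordinates indexed by the finite type 'n.
All tensors are given by their components with respect to the coordinate frame.\<close>

definition pd :: "'n::finite \<Rightarrow> (real^'n \<Rightarrow> real) \<Rightarrow> real^'n \<Rightarrow> real" where
  "pd a f x = frechet_derivative f (at x) (axis a 1)"

fun pds :: "'n::finite list \<Rightarrow> (real^'n \<Rightarrow> real) \<Rightarrow> real^'n \<Rightarrow> real" where
  "pds [] f = f"
| "pds (i # is) f = pd i (pds is f)"

definition smooth_on :: "(real^'n::finite) set \<Rightarrow> (real^'n \<Rightarrow> real) \<Rightarrow> bool" where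
  "smooth_on U f \<longleftrightarrow> (\<forall>is. pds is f differentiable_on U)"

definition semi_riemannian_metric :: "(real^'n::finite) set \<Rightarrow> (real^'n \<Rightarrow> real^'n^'n) \<Rightarrow> bool" where
  "semi_riemannian_metric U G \<longleftrightarrow>
     (\<forall>i j. smooth_on U (\<lambda>x. G x $ i $ j)) \<and>
     (\<forall>x\<in>U. transpose (G x) = G x \<and> det (G x) \<noteq> 0)"

definition ginv :: "(real^'n::finite \<Rightarrow> real^'n^'n) \<Rightarrow> real^'n \<Rightarrow> real^'n^'n" where
  "ginv G x = matrix_inv (G x)"

definition chr :: "(real^'n::finite \<Rightarrow> real^'n^'n) \<Rightarrow> 'n \<Rightarrow> 'n \<Rightarrow> 'n \<Rightarrow> real^'n \<Rightarrow> real" where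
  "chr G k i j x = (1/2) * (\<Sum>l\<in>UNIV. ginv G x $ k $ l *
      (pd i (\<lambda>y. G y $ j $ l) x + pd j (\<lambda>y. G y $ i $ l) x - pd l (\<lambda>y. G y $ i $ j) x))"

text \<open>R(\<partial>a,\<partial>b)\<partial>c = \<Sum>m Rup a b c m \<partial>m, with
  R(X,Y) = \<nabla>X\<nabla>Y - \<nabla>Y\<nabla>X - \<nabla>[X,Y].\<close>
definition Rup :: "(real^'n::finite \<Rightarrow> real^'n^'n) \<Rightarrow> 'n \<Rightarrow> 'n \<Rightarrow> 'n \<Rightarrow> 'n \<Rightarrow> real^'n \<Rightarrow> real" where
  "Rup G a b c m x = pd a (chr G m b c) x - pd b (chr G m a c) x
     + (\<Sum>p\<in>UNIV. chr G p b c x * chr G m a p x - chr G p a c x * chr G m b p x)"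

definition Curv :: "(real^'n::finite \<Rightarrow> real^'n^'n) \<Rightarrow> 'n \<Rightarrow> 'n \<Rightarrow> 'n \<Rightarrow> 'n \<Rightarrow> real^'n \<Rightarrow> real" where
  "Curv G a b c d x = (\<Sum>m\<in>UNIV. Rup G a b c m x * G x $ m $ d)"

text \<open>Ricci tensor S(X,Y) = \<Sum>i \<epsilon>i R(ei,X,Y,ei) (trace over first and last slot).\<close>
definition Ric :: "(real^'n::finite \<Rightarrow> real^'n^'n) \<Rightarrow> 'n \<Rightarrow> 'n \<Rightarrow> real^'n \<Rightarrow> real" where
  "Ric G b c x = (\<Sum>a\<in>UNIV. \<Sum>d\<in>UNIV. ginv G x $ a $ d * Curv G a b c d x)"

definition scal :: "(real^'n::finite \<Rightarrow> real^'n^'n) \<Rightarrow> real^'n \<Rightarrow> real" where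
  "scal G x = (\<Sum>b\<in>UNIV. \<Sum>c\<in>UNIV. ginv G x $ b $ c * Ric G b c x)"

text \<open>S^2(X,Y) = S(\<S>X,Y) and \<kappa>^(2) = Tr(S^2).\<close>
definition Ric2 :: "(real^'n::finite \<Rightarrow> real^'n^'n) \<Rightarrow> 'n \<Rightarrow> 'n \<Rightarrow> real^'n \<Rightarrow> real" where
  "Ric2 G a b x = (\<Sum>c\<in>UNIV. \<Sum>d\<in>UNIV. Ric G a c x * ginv G x $ c $ d * Ric G d b x)"

definition scal2 :: "(real^'n::finite \<Rightarrow> real^'n^'n) \<Rightarrow> real^'n \<Rightarrow> real" where
  "scal2 G x = (\<Sum>a\<in>UNIV. \<Sum>b\<in>UNIV. ginv G x $ a $ b * Ric2 G a b x)"

definition covR :: "(real^'n::finite \<Rightarrow> real^'n^'n) \<Rightarrow> 'n \<Rightarrow> 'n \<Rightarrow> 'n \<Rightarrow> 'n \<Rightarrow> 'n \<Rightarrow> real^'n \<Rightarrow> real" where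
  "covR G a b c d e x = pd a (Curv G b c d e) x
     - (\<Sum>p\<in>UNIV. chr G p a b x * Curv G p c d e x + chr G p a c x * Curv G b p d e x
                 + chr G p a d x * Curv G b c p e x + chr G p a e x * Curv G b c d p x)"

definition kulkarni :: "('n \<Rightarrow> 'n \<Rightarrow> real) \<Rightarrow> ('n \<Rightarrow> 'n \<Rightarrow> real) \<Rightarrow> 'n \<Rightarrow> 'n \<Rightarrow> 'n \<Rightarrow> 'n \<Rightarrow> real" where
  "kulkarni A E x1 x2 y1 y2 = A x1 y2 * E x2 y1 + A x2 y1 * E x1 y2
      - A x1 y1 * E x2 y2 - A x2 y2 * E x1 y1"

end

theory Submission
  imports Defs
begin


lemma swap3:
  fixes F :: "'n::finite \<Rightarrow> 'n \<Rightarrow> 'n \<Rightarrow> real"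
  shows "(\<Sum>b\<in>UNIV. \<Sum>e\<in>UNIV. \<Sum>p\<in>UNIV. F b e p) = (\<Sum>p\<in>UNIV. \<Sum>e\<in>UNIV. \<Sum>b\<in>UNIV. F b e p)"
proof -
  have "(\<Sum>b\<in>UNIV. \<Sum>e\<in>UNIV. \<Sum>p\<in>UNIV. F b e p) = (\<Sum>b\<in>UNIV. \<Sum>p\<in>UNIV. \<Sum>e\<in>UNIV. F b e p)"
    by (rule sum.cong[OF refl], rule sum.swap)
  also have "\<dots> = (\<Sum>p\<in>UNIV. \<Sum>b\<in>UNIV. \<Sum>e\<in>UNIV. F b e p)" by (rule sum.swap)
  also have "\<dots> = (\<Sum>p\<in>UNIV. \<Sum>e\<in>UNIV. \<Sum>b\<in>UNIV. F b e p)"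
    by (rule sum.cong[OF refl], rule sum.swap)
  finally show ?thesis .
qed

lemma swap3b:
  fixes F :: "'n::finite \<Rightarrow> 'n \<Rightarrow> 'n \<Rightarrow> real"
  shows "(\<Sum>b\<in>UNIV. \<Sum>e\<in>UNIV. \<Sum>p\<in>UNIV. F b e p) = (\<Sum>b\<in>UNIV. \<Sum>p\<in>UNIV. \<Sum>e\<in>UNIV. F b e p)"
  by (rule sum.cong[OF refl], rule sum.swap)

lemma Q:
  fixes A K X :: "'n::finite \<Rightarrow> 'n \<Rightarrow> real"
  shows "(\<Sum>b\<in>UNIV. \<Sum>e\<in>UNIV. A b e * (\<Sum>p\<in>UNIV. K p b * X p e + K p e * X b p))
       = (\<Sum>b\<in>UNIV. \<Sum>e\<in>UNIV. (\<Sum>p\<in>UNIV. A p e * K b p + A b p * K e p) * X b e)"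
proof -
  have 1: "(\<Sum>b\<in>UNIV. \<Sum>e\<in>UNIV. \<Sum>p\<in>UNIV. A b e * K p b * X p e)
        = (\<Sum>b\<in>UNIV. \<Sum>e\<in>UNIV. \<Sum>p\<in>UNIV. A p e * K b p * X b e)"
    by (rule swap3)
  have 2: "(\<Sum>b\<in>UNIV. \<Sum>e\<in>UNIV. \<Sum>p\<in>UNIV. A b e * K p e * X b p)
        = (\<Sum>b\<in>UNIV. \<Sum>e\<in>UNIV. \<Sum>p\<in>UNIV. A b p * K e p * X b e)"
    by (rule swap3b)
  have "(\<Sum>b\<in>UNIV. \<Sum>e\<in>UNIV. A b e * (\<Sum>p\<in>UNIV. K p b * X p e + K p e * X b p))
     = (\<Sum>b\<in>UNIV. \<Sum>e\<in>UNIV. \<Sum>p\<in>UNIV. A b e * K p b * X p e) + (\<Sum>b\<in>UNIV. \<Sum>e\<in>UNIV. \<Sum>p\<in>UNIV. A b e * K p e * X b p)"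
    by (simp add: sum_distrib_left sum.distrib algebra_simps)
  also have "\<dots> = (\<Sum>b\<in>UNIV. \<Sum>e\<in>UNIV. \<Sum>p\<in>UNIV. A p e * K b p * X b e + A b p * K e p * X b e)"
    unfolding 1 2 by (simp add: sum.distrib)
  also have "\<dots> = (\<Sum>b\<in>UNIV. \<Sum>e\<in>UNIV. (\<Sum>p\<in>UNIV. A p e * K b p + A b p * K e p) * X b e)"
    by (simp add: sum_distrib_right distrib_right mult.assoc)
  finally show ?thesis .
qed



lemma pd_hasd: "(f has_derivative f') (at x) \<Longrightarrow> pd a f x = f' (axis a 1)"
  unfolding pd_def by (simp add: frechet_derivative_at[symmetric])

lemma pd_add: "f differentiable at x \<Longrightarrow> g differentiable at x \<Longrightarrow>
   pd a (\<lambda>y. f y + g y) x = pd a f x + pd a g x"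
proof -
  assume "f differentiable at x" "g differentiable at x"
  then obtain f' g' where f: "(f has_derivative f') (at x)" and g: "(g has_derivative g') (at x)"
    unfolding differentiable_def by blast
  show ?thesis using pd_hasd[OF has_derivative_add[OF f g]] pd_hasd[OF f] pd_hasd[OF g] by simp
qed

lemma pd_diff: "f differentiable at x \<Longrightarrow> g differentiable at x \<Longrightarrow>
   pd a (\<lambda>y. f y - g y) x = pd a f x - pd a g x"
proof -
  assume "f differentiable at x" "g differentiable at x"
  then obtain f' g' where f: "(f has_derivative f') (at x)" and g: "(g has_derivative g') (at x)"
    unfolding differentiable_def by blast
  show ?thesis using pd_hasd[OF has_derivative_diff[OF f g]] pd_hasd[OF f] pd_hasd[OF g] by simp
qed

lemma pd_mult: "f differentiable at x \<Longrightarrow> g differentiable at x \<Longrightarrow>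
   pd a (\<lambda>y. f y * g y :: real) x = pd a f x * g x + f x * pd a g x"
proof -
  assume "f differentiable at x" "g differentiable at x"
  then obtain f' g' where f: "(f has_derivative f') (at x)" and g: "(g has_derivative g') (at x)"
    unfolding differentiable_def by blast
  have "((\<lambda>y. f y * g y) has_derivative (\<lambda>h. f x * g' h + f' h * g x)) (at x)"
    using has_derivative_mult[OF f g] .
  then show ?thesis using pd_hasd[OF f] pd_hasd[OF g] pd_hasd[of "(\<lambda>y. f y * g y)"] by (simp add: mult.commute)
qed

lemma pd_sum: "finite I \<Longrightarrow> (\<And>i. i \<in> I \<Longrightarrow> f i differentiable at x) \<Longrightarrow>
   pd a (\<lambda>y. \<Sum>i\<in>I. f i y :: real) x = (\<Sum>i\<in>I. pd a (f i) x)"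
proof -
  assume fin: "finite I" and d: "\<And>i. i \<in> I \<Longrightarrow> f i differentiable at x"
  have "\<forall>i\<in>I. \<exists>f'. (f i has_derivative f') (at x)" using d unfolding differentiable_def by blast
  then obtain F where F: "\<And>i. i\<in>I \<Longrightarrow> (f i has_derivative F i) (at x)" by metis
  have "((\<lambda>y. \<Sum>i\<in>I. f i y) has_derivative (\<lambda>h. \<Sum>i\<in>I. F i h)) (at x)"
    by (rule has_derivative_sum) (use F in auto)
  then have "pd a (\<lambda>y. \<Sum>i\<in>I. f i y) x = (\<Sum>i\<in>I. F i (axis a 1))" by (rule pd_hasd)
  also have "\<dots> = (\<Sum>i\<in>I. pd a (f i) x)" using pd_hasd[OF F] by simp
  finally show ?thesis .
qed

lemma pd_const: "pd a (\<lambda>y. c :: real) x = 0"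
proof -
  have "((\<lambda>y. c) has_derivative (\<lambda>h. 0)) (at x)" by simp
  from pd_hasd[OF this, of a] show ?thesis by simp
qed

lemma pd_local: assumes "open U" "x \<in> U" "\<And>y. y \<in> U \<Longrightarrow> f y = h y" "h differentiable at x"
  shows "pd a f x = pd a h x" "f differentiable at x"
proof -
  obtain h' where h: "(h has_derivative h') (at x)" using assms(4) unfolding differentiable_def by blast
  have f: "(f has_derivative h') (at x)"
    by (rule has_derivative_transform_within_open[OF h assms(1,2)]) (use assms(3) in auto)
  show "pd a f x = pd a h x" using pd_hasd[OF f] pd_hasd[OF h] by simp
  show "f differentiable at x" using f unfolding differentiable_def by blast
qed

lemma diff_prod: "finite I \<Longrightarrow> (\<And>i. i \<in> I \<Longrightarrow> f i differentiable at x) \<Longrightarrow>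
   (\<lambda>y. \<Prod>i\<in>I. f i y :: real) differentiable at x"
proof -
  assume fin: "finite I" and d: "\<And>i. i \<in> I \<Longrightarrow> f i differentiable at x"
  have "\<forall>i\<in>I. \<exists>f'. (f i has_derivative f') (at x)" using d unfolding differentiable_def by blast
  then obtain F where F: "\<And>i. i\<in>I \<Longrightarrow> (f i has_derivative F i) (at x)" by metis
  show ?thesis unfolding differentiable_def by (rule exI, rule has_derivative_prod[OF F])
qed

lemma det_diff:
  fixes M :: "real^'n \<Rightarrow> real^'m::finite^'m"
  assumes "\<And>i j. (\<lambda>z. M z $ i $ j) differentiable at y"
  shows "(\<lambda>z. det (M z)) differentiable at y"
  unfolding det_def
  apply (rule differentiable_sum)
   apply simp
  apply (intro ballI differentiable_mult differentiable_const diff_prod)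
   apply simp
  apply (rule assms)
  done

lemma inv_props:
  fixes A :: "real^'n::finite^'n"
  assumes "det A \<noteq> 0"
  shows "A ** matrix_inv A = mat 1" "matrix_inv A ** A = mat 1"
proof -
  have "invertible A" using assms invertible_det_nz by blast
  then have "\<exists>A'. A ** A' = mat 1 \<and> A' ** A = mat 1" unfolding invertible_def by blast
  then have "A ** matrix_inv A = mat 1 \<and> matrix_inv A ** A = mat 1"
    unfolding matrix_inv_def by (rule someI_ex)
  then show "A ** matrix_inv A = mat 1" "matrix_inv A ** A = mat 1" by auto
qed

lemma inv_entry:
  fixes A :: "real^'n::finite^'n"
  assumes "det A \<noteq> 0"
  shows "matrix_inv A $ k $ j = det (\<chi> r s. if s = k then (if r = j then 1 else 0) else A $ r $ s) / det A"
proof -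
  let ?x = "\<chi> k. matrix_inv A $ k $ j"
  let ?b = "\<chi> i. if i = j then 1 else (0::real)"
  have AB: "(\<Sum>k\<in>UNIV. A$r$k * matrix_inv A$k$j) = (if r = j then 1 else 0)" for r
    using arg_cong[of _ _ "\<lambda>M. M$r$j", OF inv_props(1)[OF assms]]
    by (simp add: matrix_matrix_mult_def mat_def)
  have "A *v ?x = ?b"
    by (simp add: vec_eq_iff matrix_vector_mult_def AB)
  then have "?x = (\<chi> k. det(\<chi> i j. if j=k then ?b$i else A$i$j) / det A)"
    using cramer[OF assms] by blast
  then have "?x $ k = (\<chi> k. det(\<chi> i j. if j=k then ?b$i else A$i$j) / det A) $ k" by simp
  moreover have "(\<chi> i j. if j=k then ?b$i else A$i$j) = (\<chi> r s. if s = k then (if r = j then 1 else 0) else A $ r $ s)"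
    by (simp add: vec_eq_iff)
  ultimately show ?thesis by simp
qed

lemma inv_sym:
  fixes A :: "real^'n::finite^'n"
  assumes "det A \<noteq> 0" "transpose A = A"
  shows "matrix_inv A $ i $ j = matrix_inv A $ j $ i"
proof -
  let ?B = "matrix_inv A"
  have "transpose ?B ** A = mat 1"
    using arg_cong[OF inv_props(1)[OF assms(1)], of transpose] assms(2)
    by (simp add: matrix_transpose_mul)
  then have "transpose ?B = transpose ?B ** (A ** ?B)" using inv_props(1)[OF assms(1)] by simp
  also have "\<dots> = ?B" using \<open>transpose ?B ** A = mat 1\<close> by (simp add: matrix_mul_assoc)
  finally have "transpose ?B $ i $ j = ?B $ i $ j" by simp
  then show ?thesis by (simp add: transpose_def)
qed




locale chart =
  fixes U :: "(real^'n::finite) set" and G :: "real^'n \<Rightarrow> real^'n^'n"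
  assumes srm: "semi_riemannian_metric U G" and opn: "open U"
begin

lemma smooth_G: "smooth_on U (\<lambda>z. G z $ i $ j)"
  using srm unfolding semi_riemannian_metric_def by blast

lemma G_diff: "y \<in> U \<Longrightarrow> (\<lambda>z. G z $ i $ j) differentiable at y"
proof -
  assume y: "y \<in> U"
  have "pds [] (\<lambda>z. G z $ i $ j) differentiable_on U" using smooth_G unfolding smooth_on_def by blast
  then show ?thesis using y by (simp add: differentiable_on_eq_differentiable_at[OF opn])
qed

lemma dG_diff: "y \<in> U \<Longrightarrow> pd a (\<lambda>z. G z $ i $ j) differentiable at y"
proof -
  assume y: "y \<in> U"
  have "pds [a] (\<lambda>z. G z $ i $ j) differentiable_on U" using smooth_G unfolding smooth_on_def by blast
  then show ?thesis using y by (simp add: differentiable_on_eq_differentiable_at[OF opn])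
qed

lemma ddG_diff: "y \<in> U \<Longrightarrow> pd b (pd a (\<lambda>z. G z $ i $ j)) differentiable at y"
proof -
  assume y: "y \<in> U"
  have "pds [b,a] (\<lambda>z. G z $ i $ j) differentiable_on U" using smooth_G unfolding smooth_on_def by blast
  then show ?thesis using y by (simp add: differentiable_on_eq_differentiable_at[OF opn])
qed

lemma detG: "y \<in> U \<Longrightarrow> det (G y) \<noteq> 0"
  using srm unfolding semi_riemannian_metric_def by blast

lemma Gsym: "y \<in> U \<Longrightarrow> G y $ i $ j = G y $ j $ i"
proof -
  assume "y \<in> U"
  then have "transpose (G y) = G y" using srm unfolding semi_riemannian_metric_def by blast
  then have "transpose (G y) $ i $ j = G y $ i $ j" by simp
  then show ?thesis by (simp add: transpose_def)
qed

lemma gi_sym: "y \<in> U \<Longrightarrow> ginv G y $ i $ j = ginv G y $ j $ i"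
proof -
  assume y: "y \<in> U"
  have "transpose (G y) = G y" using srm y unfolding semi_riemannian_metric_def by blast
  then show ?thesis unfolding ginv_def by (rule inv_sym[OF detG[OF y]])
qed

lemma gi_diff: "y \<in> U \<Longrightarrow> (\<lambda>z. ginv G z $ k $ j) differentiable at y"
proof -
  assume y: "y \<in> U"
  let ?M = "\<lambda>z. (\<chi> r s. if s = k then (if r = j then 1 else 0) else G z $ r $ s) :: real^'n^'n"
  have "(\<lambda>z. det (?M z)) differentiable at y"
  proof (rule det_diff)
    fix i j' show "(\<lambda>z. ?M z $ i $ j') differentiable at y"
      by (cases "j' = k") (simp_all add: G_diff[OF y])
  qed
  moreover have "(\<lambda>z. det (G z)) differentiable at y"
    by (rule det_diff) (simp add: G_diff[OF y])
  ultimately have "(\<lambda>z. det (?M z) / det (G z)) differentiable at y"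
    using detG[OF y] by (simp add: differentiable_divide)
  moreover have "\<And>z. z \<in> U \<Longrightarrow> ginv G z $ k $ j = det (?M z) / det (G z)"
    unfolding ginv_def using inv_entry detG by blast
  ultimately show ?thesis using pd_local(2)[OF opn y, of "\<lambda>z. ginv G z $ k $ j" "\<lambda>z. det (?M z) / det (G z)"] by blast
qed

lemma E1: "z \<in> U \<Longrightarrow> (\<Sum>p\<in>UNIV. ginv G z $ b $ p * G z $ p $ e) = (if b = e then 1 else 0)"
  using arg_cong[of _ _ "\<lambda>M. M$b$e", OF inv_props(2)[OF detG]]
  by (simp add: matrix_matrix_mult_def mat_def ginv_def)

lemma E2: "z \<in> U \<Longrightarrow> (\<Sum>p\<in>UNIV. G z $ b $ p * ginv G z $ p $ e) = (if b = e then 1 else 0)"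
  using arg_cong[of _ _ "\<lambda>M. M$b$e", OF inv_props(1)[OF detG]]
  by (simp add: matrix_matrix_mult_def mat_def ginv_def)

lemma dGsym: "y \<in> U \<Longrightarrow> pd a (\<lambda>z. G z $ p $ l) y = pd a (\<lambda>z. G z $ l $ p) y"
  by (rule pd_local(1)[OF opn _ _ G_diff]) (auto intro: Gsym)

lemma delta_sum: "(\<Sum>p\<in>UNIV. f p * (if p = q then 1 else 0)) = (f (q::'n) :: real)"
proof -
  have "(\<Sum>p\<in>UNIV. f p * (if p = q then 1 else 0)) = (\<Sum>p\<in>UNIV. if p = q then f p else 0)"
    by (rule sum.cong) auto
  then show ?thesis by simp
qed

lemma pd_gi: assumes y: "y \<in> U"
  shows "pd a (\<lambda>z. ginv G z $ b $ q) y =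
    - (\<Sum>p\<in>UNIV. \<Sum>e\<in>UNIV. ginv G y $ b $ p * pd a (\<lambda>z. G z $ p $ e) y * ginv G y $ e $ q)"
proof -
  have e1: "(\<Sum>p\<in>UNIV. pd a (\<lambda>z. ginv G z $ b $ p) y * G y $ p $ e
        + ginv G y $ b $ p * pd a (\<lambda>z. G z $ p $ e) y) = 0" for e
  proof -
    have "pd a (\<lambda>z. \<Sum>p\<in>UNIV. ginv G z $ b $ p * G z $ p $ e) y
        = pd a (\<lambda>z. if b = e then 1 else 0) y"
      by (rule pd_local(1)[OF opn y]) (auto simp: E1)
    also have "\<dots> = 0" by (rule pd_const)
    finally have "pd a (\<lambda>z. \<Sum>p\<in>UNIV. ginv G z $ b $ p * G z $ p $ e) y = 0" .
    moreover have "pd a (\<lambda>z. \<Sum>p\<in>UNIV. ginv G z $ b $ p * G z $ p $ e) y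
        = (\<Sum>p\<in>UNIV. pd a (\<lambda>z. ginv G z $ b $ p * G z $ p $ e) y)"
      by (rule pd_sum) (auto intro!: differentiable_mult gi_diff G_diff y)
    moreover have "\<And>p. pd a (\<lambda>z. ginv G z $ b $ p * G z $ p $ e) y =
        pd a (\<lambda>z. ginv G z $ b $ p) y * G y $ p $ e + ginv G y $ b $ p * pd a (\<lambda>z. G z $ p $ e) y"
      by (rule pd_mult) (auto intro!: gi_diff G_diff y)
    ultimately show ?thesis by simp
  qed
  have "pd a (\<lambda>z. ginv G z $ b $ q) y = (\<Sum>p\<in>UNIV. pd a (\<lambda>z. ginv G z $ b $ p) y * (if p = q then 1 else 0))"
    by (rule delta_sum[symmetric])
  also have "\<dots> = (\<Sum>p\<in>UNIV. pd a (\<lambda>z. ginv G z $ b $ p) y * (\<Sum>e\<in>UNIV. G y $ p $ e * ginv G y $ e $ q))"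
    by (simp add: E2[OF y])
  also have "\<dots> = (\<Sum>e\<in>UNIV. (\<Sum>p\<in>UNIV. pd a (\<lambda>z. ginv G z $ b $ p) y * G y $ p $ e) * ginv G y $ e $ q)"
  proof -
    have "(\<Sum>p\<in>UNIV. pd a (\<lambda>z. ginv G z $ b $ p) y * (\<Sum>e\<in>UNIV. G y $ p $ e * ginv G y $ e $ q))
       = (\<Sum>p\<in>UNIV. \<Sum>e\<in>UNIV. pd a (\<lambda>z. ginv G z $ b $ p) y * G y $ p $ e * ginv G y $ e $ q)"
      by (simp add: sum_distrib_left mult.assoc)
    also have "\<dots> = (\<Sum>e\<in>UNIV. \<Sum>p\<in>UNIV. pd a (\<lambda>z. ginv G z $ b $ p) y * G y $ p $ e * ginv G y $ e $ q)"
      by (rule sum.swap)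
    also have "\<dots> = (\<Sum>e\<in>UNIV. (\<Sum>p\<in>UNIV. pd a (\<lambda>z. ginv G z $ b $ p) y * G y $ p $ e) * ginv G y $ e $ q)"
      by (simp add: sum_distrib_right)
    finally show ?thesis .
  qed
  also have "\<dots> = (\<Sum>e\<in>UNIV. (- (\<Sum>p\<in>UNIV. ginv G y $ b $ p * pd a (\<lambda>z. G z $ p $ e) y)) * ginv G y $ e $ q)"
  proof (rule sum.cong[OF refl])
    fix e
    have "(\<Sum>p\<in>UNIV. pd a (\<lambda>z. ginv G z $ b $ p) y * G y $ p $ e) = - (\<Sum>p\<in>UNIV. ginv G y $ b $ p * pd a (\<lambda>z. G z $ p $ e) y)"
      using e1[of e] by (simp add: sum.distrib eq_neg_iff_add_eq_0)
    then show "(\<Sum>p\<in>UNIV. pd a (\<lambda>z. ginv G z $ b $ p) y * G y $ p $ e) * ginv G y $ e $ q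
       = (- (\<Sum>p\<in>UNIV. ginv G y $ b $ p * pd a (\<lambda>z. G z $ p $ e) y)) * ginv G y $ e $ q" by simp
  qed
  also have "\<dots> = - (\<Sum>e\<in>UNIV. \<Sum>p\<in>UNIV. ginv G y $ b $ p * pd a (\<lambda>z. G z $ p $ e) y * ginv G y $ e $ q)"
    by (simp add: sum_distrib_right sum_negf)
  also have "\<dots> = - (\<Sum>p\<in>UNIV. \<Sum>e\<in>UNIV. ginv G y $ b $ p * pd a (\<lambda>z. G z $ p $ e) y * ginv G y $ e $ q)"
    by (rule arg_cong[where f=uminus], rule sum.swap)
  finally show ?thesis .
qed


lemma H: assumes y: "y \<in> U"
  shows "pd a (\<lambda>z. ginv G z $ b $ e) y =
    - (\<Sum>p\<in>UNIV. ginv G y $ p $ e * chr G b a p y + ginv G y $ b $ p * chr G e a p y)"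
proof -
  define A where "A p l = pd a (\<lambda>z. G z $ p $ l) y" for p l
  define B where "B p l = pd p (\<lambda>z. G z $ a $ l) y" for p l
  define C where "C p l = pd l (\<lambda>z. G z $ a $ p) y" for p l
  have BC: "B l p = C p l" for p l unfolding B_def C_def ..
  have CB: "C l p = B p l" for p l unfolding B_def C_def ..
  have chr1: "chr G k a p y = 1/2 * (\<Sum>l\<in>UNIV. ginv G y $ k $ l * (A p l + B p l - C p l))" for k p
    unfolding chr_def A_def B_def C_def by simp
  have S1: "(\<Sum>p\<in>UNIV. ginv G y $ p $ e * chr G b a p y)
     = (\<Sum>p\<in>UNIV. \<Sum>l\<in>UNIV. 1/2 * (ginv G y $ p $ e * ginv G y $ b $ l * (A p l + B p l - C p l)))"
    unfolding chr1 by (simp add: sum_distrib_left mult_ac)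
  have "(\<Sum>p\<in>UNIV. ginv G y $ b $ p * chr G e a p y)
     = (\<Sum>p\<in>UNIV. \<Sum>l\<in>UNIV. 1/2 * (ginv G y $ b $ p * ginv G y $ e $ l * (A p l + B p l - C p l)))"
    unfolding chr1 by (simp add: sum_distrib_left mult_ac)
  also have "\<dots> = (\<Sum>l\<in>UNIV. \<Sum>p\<in>UNIV. 1/2 * (ginv G y $ b $ p * ginv G y $ e $ l * (A p l + B p l - C p l)))"
    by (rule sum.swap)
  finally have S2: "(\<Sum>p\<in>UNIV. ginv G y $ b $ p * chr G e a p y)
     = (\<Sum>p\<in>UNIV. \<Sum>l\<in>UNIV. 1/2 * (ginv G y $ b $ l * ginv G y $ e $ p * (A l p + B l p - C l p)))" .
  have pw: "1/2 * (ginv G y $ p $ e * ginv G y $ b $ l * (A p l + B p l - C p l))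
      + 1/2 * (ginv G y $ b $ l * ginv G y $ e $ p * (A l p + B l p - C l p))
      = ginv G y $ b $ l * A l p * ginv G y $ p $ e" for p l
  proof -
    have "ginv G y $ e $ p = ginv G y $ p $ e" by (rule gi_sym[OF y])
    moreover have "A p l = A l p" unfolding A_def by (rule dGsym[OF y])
    ultimately show ?thesis unfolding B_def C_def by (simp add: algebra_simps)
  qed
  have "(\<Sum>p\<in>UNIV. ginv G y $ p $ e * chr G b a p y + ginv G y $ b $ p * chr G e a p y)
     = (\<Sum>p\<in>UNIV. \<Sum>l\<in>UNIV. ginv G y $ b $ l * A l p * ginv G y $ p $ e)"
  proof -
    have "(\<Sum>p\<in>UNIV. ginv G y $ p $ e * chr G b a p y + ginv G y $ b $ p * chr G e a p y)
      = (\<Sum>p\<in>UNIV. \<Sum>l\<in>UNIV. 1/2 * (ginv G y $ p $ e * ginv G y $ b $ l * (A p l + B p l - C p l))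
      + 1/2 * (ginv G y $ b $ l * ginv G y $ e $ p * (A l p + B l p - C l p)))"
      by (simp only: sum.distrib S1 S2)
    then show ?thesis by (simp only: pw)
  qed
  also have "\<dots> = (\<Sum>l\<in>UNIV. \<Sum>p\<in>UNIV. ginv G y $ b $ l * A l p * ginv G y $ p $ e)"
    by (rule sum.swap)
  also have "\<dots> = - pd a (\<lambda>z. ginv G z $ b $ e) y"
    unfolding pd_gi[OF y] A_def by simp
  finally show ?thesis by simp
qed

end



context chart begin

lemma chr_eq: "chr G k i j = (\<lambda>x. (1/2) * (\<Sum>l\<in>UNIV. ginv G x $ k $ l *
      (pd i (\<lambda>y. G y $ j $ l) x + pd j (\<lambda>y. G y $ i $ l) x - pd l (\<lambda>y. G y $ i $ j) x)))"
  by (rule ext) (simp add: chr_def)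

lemma gi_diff': "y \<in> U \<Longrightarrow> (\<lambda>z. ginv G z $ k $ j) differentiable at y" by (rule gi_diff)

lemma chr_diff: "y \<in> U \<Longrightarrow> chr G k i j differentiable at y"
  unfolding chr_eq
  by (intro differentiable_mult differentiable_const differentiable_sum ballI finite
        differentiable_add differentiable_diff gi_diff dG_diff; assumption?)


definition Dgi :: "'n \<Rightarrow> 'n \<Rightarrow> 'n \<Rightarrow> real^'n \<Rightarrow> real" where
  "Dgi a k l y = - (\<Sum>p\<in>UNIV. \<Sum>e\<in>UNIV. ginv G y $ k $ p * pd a (\<lambda>z. G z $ p $ e) y * ginv G y $ e $ l)"

lemma Dgi_diff: "y \<in> U \<Longrightarrow> Dgi a k l differentiable at y"
proof -
  assume y: "y \<in> U"
  have "(\<lambda>y. Dgi a k l y) differentiable at y"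
    unfolding Dgi_def
    by (intro differentiable_minus differentiable_mult differentiable_sum ballI finite
        gi_diff dG_diff y)
  then show ?thesis by simp
qed

definition Fchr :: "'n \<Rightarrow> 'n \<Rightarrow> 'n \<Rightarrow> 'n \<Rightarrow> real^'n \<Rightarrow> real" where
  "Fchr a k i j y = (1/2) * (\<Sum>l\<in>UNIV.
      Dgi a k l y * (pd i (\<lambda>y. G y $ j $ l) y + pd j (\<lambda>y. G y $ i $ l) y - pd l (\<lambda>y. G y $ i $ j) y)
    + ginv G y $ k $ l * (pd a (pd i (\<lambda>y. G y $ j $ l)) y + pd a (pd j (\<lambda>y. G y $ i $ l)) y - pd a (pd l (\<lambda>y. G y $ i $ j)) y))"

lemma Fchr_diff: "y \<in> U \<Longrightarrow> Fchr a k i j differentiable at y"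
proof -
  assume y: "y \<in> U"
  have "(\<lambda>y. Fchr a k i j y) differentiable at y"
    unfolding Fchr_def
    by (intro differentiable_add differentiable_diff differentiable_mult differentiable_const
        differentiable_sum ballI finite gi_diff dG_diff ddG_diff Dgi_diff y)
  then show ?thesis by simp
qed

lemma dchr: assumes y: "y \<in> U" shows "pd a (chr G k i j) y = Fchr a k i j y"
proof -
  let ?X = "\<lambda>l x. pd i (\<lambda>y. G y $ j $ l) x + pd j (\<lambda>y. G y $ i $ l) x - pd l (\<lambda>y. G y $ i $ j) x"
  have dX: "?X l differentiable at y" for l
    by (intro differentiable_add differentiable_diff dG_diff y)
  have pX: "pd a (?X l) y = pd a (pd i (\<lambda>y. G y $ j $ l)) y + pd a (pd j (\<lambda>y. G y $ i $ l)) y - pd a (pd l (\<lambda>y. G y $ i $ j)) y" for l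
  proof -
    have "pd a (?X l) y = pd a (\<lambda>x. pd i (\<lambda>y. G y $ j $ l) x + pd j (\<lambda>y. G y $ i $ l) x) y - pd a (pd l (\<lambda>y. G y $ i $ j)) y"
      by (rule pd_diff) (intro differentiable_add dG_diff y)+
    also have "pd a (\<lambda>x. pd i (\<lambda>y. G y $ j $ l) x + pd j (\<lambda>y. G y $ i $ l) x) y
       = pd a (pd i (\<lambda>y. G y $ j $ l)) y + pd a (pd j (\<lambda>y. G y $ i $ l)) y"
      by (rule pd_add) (intro dG_diff y)+
    finally show ?thesis by simp
  qed
  have "pd a (chr G k i j) y = pd a (\<lambda>x. (1/2) * (\<Sum>l\<in>UNIV. ginv G x $ k $ l * ?X l x)) y"
    unfolding chr_eq ..
  also have "\<dots> = pd a (\<lambda>x. 1/2) y * (\<Sum>l\<in>UNIV. ginv G y $ k $ l * ?X l y) + 1/2 * pd a (\<lambda>x. \<Sum>l\<in>UNIV. ginv G x $ k $ l * ?X l x) y"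
    by (rule pd_mult) (intro differentiable_const differentiable_sum differentiable_mult ballI finite gi_diff dX y)+
  also have "pd a (\<lambda>x. \<Sum>l\<in>UNIV. ginv G x $ k $ l * ?X l x) y = (\<Sum>l\<in>UNIV. pd a (\<lambda>x. ginv G x $ k $ l * ?X l x) y)"
    by (rule pd_sum) (intro differentiable_mult finite gi_diff dX y)+
  also have "\<dots> = (\<Sum>l\<in>UNIV. pd a (\<lambda>x. ginv G x $ k $ l) y * ?X l y + ginv G y $ k $ l * pd a (?X l) y)"
    by (rule sum.cong[OF refl], rule pd_mult) (intro gi_diff dX y)+
  finally show ?thesis unfolding pd_const Fchr_def pX Dgi_def pd_gi[OF y] by simp
qed

lemma dchr_diff: "y \<in> U \<Longrightarrow> pd a (chr G k i j) differentiable at y"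
proof -
  assume y: "y \<in> U"
  have "\<And>z. z \<in> U \<Longrightarrow> pd a (chr G k i j) z = Fchr a k i j z" by (rule dchr)
  then show ?thesis using pd_local(2)[OF opn y, of "pd a (chr G k i j)" "Fchr a k i j"] Fchr_diff[OF y] by blast
qed

lemma Rup_diff: "y \<in> U \<Longrightarrow> Rup G a b c m differentiable at y"
proof -
  assume y: "y \<in> U"
  have "(\<lambda>x. Rup G a b c m x) differentiable at y"
    unfolding Rup_def
    by (intro differentiable_add differentiable_diff differentiable_mult differentiable_sum ballI finite
        dchr_diff chr_diff y)
  then show ?thesis by simp
qed

lemma Curv_diff: "y \<in> U \<Longrightarrow> Curv G a b c d differentiable at y"
proof -
  assume y: "y \<in> U"
  have "(\<lambda>x. Curv G a b c d x) differentiable at y"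
    unfolding Curv_def
    by (intro differentiable_mult differentiable_sum ballI finite Rup_diff G_diff y)
  then show ?thesis by simp
qed

end



definition contr :: "('n::finite \<Rightarrow> 'n \<Rightarrow> real) \<Rightarrow> ('n \<Rightarrow> 'n \<Rightarrow> 'n \<Rightarrow> 'n \<Rightarrow> real) \<Rightarrow> real" where
  "contr g F = (\<Sum>c\<in>UNIV. \<Sum>d\<in>UNIV. g c d * (\<Sum>b\<in>UNIV. \<Sum>e\<in>UNIV. g b e * F b c d e))"

definition tr :: "('n::finite \<Rightarrow> 'n \<Rightarrow> real) \<Rightarrow> ('n \<Rightarrow> 'n \<Rightarrow> real) \<Rightarrow> real" where
  "tr g A = (\<Sum>c\<in>UNIV. \<Sum>d\<in>UNIV. g c d * A c d)"

lemma swap4: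
  fixes F :: "'n::finite \<Rightarrow> 'n \<Rightarrow> 'n \<Rightarrow> 'n \<Rightarrow> real"
  shows "(\<Sum>c\<in>UNIV. \<Sum>d\<in>UNIV. \<Sum>b\<in>UNIV. \<Sum>e\<in>UNIV. F b c d e) = (\<Sum>b\<in>UNIV. \<Sum>e\<in>UNIV. \<Sum>c\<in>UNIV. \<Sum>d\<in>UNIV. F b c d e)"
proof -
  have "(\<Sum>c\<in>UNIV. \<Sum>d\<in>UNIV. \<Sum>b\<in>UNIV. \<Sum>e\<in>UNIV. F b c d e) = (\<Sum>c\<in>UNIV. \<Sum>b\<in>UNIV. \<Sum>d\<in>UNIV. \<Sum>e\<in>UNIV. F b c d e)"
    by (rule sum.cong[OF refl], rule sum.swap)
  also have "\<dots> = (\<Sum>b\<in>UNIV. \<Sum>c\<in>UNIV. \<Sum>d\<in>UNIV. \<Sum>e\<in>UNIV. F b c d e)" by (rule sum.swap)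
  also have "\<dots> = (\<Sum>b\<in>UNIV. \<Sum>e\<in>UNIV. \<Sum>c\<in>UNIV. \<Sum>d\<in>UNIV. F b c d e)"
  proof (rule sum.cong[OF refl])
    fix b
    have "(\<Sum>c\<in>UNIV. \<Sum>d\<in>UNIV. \<Sum>e\<in>UNIV. F b c d e) = (\<Sum>c\<in>UNIV. \<Sum>e\<in>UNIV. \<Sum>d\<in>UNIV. F b c d e)"
      by (rule sum.cong[OF refl], rule sum.swap)
    also have "\<dots> = (\<Sum>e\<in>UNIV. \<Sum>c\<in>UNIV. \<Sum>d\<in>UNIV. F b c d e)" by (rule sum.swap)
    finally show "(\<Sum>c\<in>UNIV. \<Sum>d\<in>UNIV. \<Sum>e\<in>UNIV. F b c d e) = (\<Sum>e\<in>UNIV. \<Sum>c\<in>UNIV. \<Sum>d\<in>UNIV. F b c d e)" .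
  qed
  finally show ?thesis .
qed

lemma contr_swap:
  fixes f h :: "'n::finite \<Rightarrow> 'n \<Rightarrow> real"
  shows "(\<Sum>c\<in>UNIV. \<Sum>d\<in>UNIV. f c d * (\<Sum>b\<in>UNIV. \<Sum>e\<in>UNIV. h b e * W b c d e))
       = (\<Sum>b\<in>UNIV. \<Sum>e\<in>UNIV. h b e * (\<Sum>c\<in>UNIV. \<Sum>d\<in>UNIV. f c d * W b c d e))"
proof -
  have "(\<Sum>c\<in>UNIV. \<Sum>d\<in>UNIV. f c d * (\<Sum>b\<in>UNIV. \<Sum>e\<in>UNIV. h b e * W b c d e))
      = (\<Sum>c\<in>UNIV. \<Sum>d\<in>UNIV. \<Sum>b\<in>UNIV. \<Sum>e\<in>UNIV. f c d * h b e * W b c d e)"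
    by (simp add: sum_distrib_left mult.assoc)
  also have "\<dots> = (\<Sum>b\<in>UNIV. \<Sum>e\<in>UNIV. \<Sum>c\<in>UNIV. \<Sum>d\<in>UNIV. f c d * h b e * W b c d e)"
    by (rule swap4)
  also have "\<dots> = (\<Sum>b\<in>UNIV. \<Sum>e\<in>UNIV. h b e * (\<Sum>c\<in>UNIV. \<Sum>d\<in>UNIV. f c d * W b c d e))"
    by (simp add: sum_distrib_left mult_ac)
  finally show ?thesis .
qed

lemma contr_add: "contr g (\<lambda>b c d e. F b c d e + F' b c d e) = contr g F + contr g F'"
  unfolding contr_def by (simp add: distrib_left sum.distrib)

lemma contr_diff: "contr g (\<lambda>b c d e. F b c d e - F' b c d e) = contr g F - contr g F'"
  unfolding contr_def by (simp add: right_diff_distrib sum_subtractf)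

lemma contr_scale: "contr g (\<lambda>b c d e. k * F b c d e) = k * contr g F"
  unfolding contr_def by (simp add: sum_distrib_left mult_ac)

lemma prod_sums: "(\<Sum>c\<in>UNIV. \<Sum>d\<in>UNIV. X c d) * (Y::real) = (\<Sum>c\<in>UNIV. \<Sum>d\<in>UNIV. X c d * Y)"
  by (simp add: sum_distrib_right)

lemma contr_t1: "contr g (\<lambda>b c d e. A b e * E c d) = tr g A * tr g E"
proof -
  have "contr g (\<lambda>b c d e. A b e * E c d) = (\<Sum>c\<in>UNIV. \<Sum>d\<in>UNIV. (g c d * E c d) * tr g A)"
    unfolding contr_def tr_def
    by (intro sum.cong refl) (simp add: sum_distrib_left mult_ac)
  also have "\<dots> = tr g E * tr g A" unfolding prod_sums[symmetric] by (simp add: tr_def)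
  finally show ?thesis by (simp add: mult.commute)
qed

lemma contr_t2: "contr g (\<lambda>b c d e. A c d * E b e) = tr g A * tr g E"
proof -
  have "contr g (\<lambda>b c d e. A c d * E b e) = (\<Sum>c\<in>UNIV. \<Sum>d\<in>UNIV. (g c d * A c d) * tr g E)"
    unfolding contr_def tr_def
    by (intro sum.cong refl) (simp add: sum_distrib_left mult_ac)
  also have "\<dots> = tr g A * tr g E" unfolding prod_sums[symmetric] by (simp add: tr_def)
  finally show ?thesis .
qed

lemma contr_kulk: "contr g (kulkarni A E) = 2 * (tr g A * tr g E)
   - contr g (\<lambda>b c d e. A b d * E c e) - contr g (\<lambda>b c d e. A c e * E b d)"
proof -
  have "kulkarni A E = (\<lambda>b c d e. ((A b e * E c d + A c d * E b e) - A b d * E c e) - A c e * E b d)"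
    by (intro ext) (simp add: kulkarni_def)
  then show ?thesis by (simp only: contr_diff contr_add contr_t1 contr_t2 mult_2)
qed

lemma delta_sum2: "(\<Sum>p\<in>UNIV. (if p = q then 1 else 0) * f p) = (f (q::'n::finite) :: real)"
proof -
  have "(\<Sum>p\<in>UNIV. (if p = q then 1 else 0) * f p) = (\<Sum>p\<in>UNIV. if p = q then f p else 0)"
    by (rule sum.cong) auto
  then show ?thesis by simp
qed

lemma M1_delta:
  fixes g A E :: "'n::finite \<Rightarrow> 'n \<Rightarrow> real"
  assumes D: "\<And>c b. (\<Sum>d\<in>UNIV. g c d * A b d) = (if c = b then 1 else 0)"
  shows "contr g (\<lambda>b c d e. A b d * E c e) = tr g E"
proof -
  have "contr g (\<lambda>b c d e. A b d * E c e) = (\<Sum>b\<in>UNIV. \<Sum>e\<in>UNIV. g b e * (\<Sum>c\<in>UNIV. \<Sum>d\<in>UNIV. g c d * (A b d * E c e)))"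
    unfolding contr_def by (rule contr_swap)
  also have "\<dots> = (\<Sum>b\<in>UNIV. \<Sum>e\<in>UNIV. g b e * (\<Sum>c\<in>UNIV. (\<Sum>d\<in>UNIV. g c d * A b d) * E c e))"
    by (simp add: sum_distrib_left sum_distrib_right mult_ac)
  also have "\<dots> = (\<Sum>b\<in>UNIV. \<Sum>e\<in>UNIV. g b e * E b e)"
    unfolding D by (simp add: delta_sum2)
  finally show ?thesis unfolding tr_def .
qed

lemma M2_delta:
  fixes g A E :: "'n::finite \<Rightarrow> 'n \<Rightarrow> real"
  assumes D: "\<And>c b. (\<Sum>e\<in>UNIV. g b e * A c e) = (if b = c then 1 else 0)"
  shows "contr g (\<lambda>b c d e. A c e * E b d) = tr g E"
proof -
  have "contr g (\<lambda>b c d e. A c e * E b d) = (\<Sum>c\<in>UNIV. \<Sum>d\<in>UNIV. g c d * (\<Sum>b\<in>UNIV. (\<Sum>e\<in>UNIV. g b e * A c e) * E b d))"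
    unfolding contr_def by (simp add: sum_distrib_left sum_distrib_right mult_ac)
  also have "\<dots> = (\<Sum>c\<in>UNIV. \<Sum>d\<in>UNIV. g c d * E c d)"
    unfolding D by (simp add: delta_sum2)
  finally show ?thesis unfolding tr_def .
qed

lemma tr_delta:
  fixes g A :: "'n::finite \<Rightarrow> 'n \<Rightarrow> real"
  assumes D: "\<And>c b. (\<Sum>d\<in>UNIV. g c d * A b d) = (if c = b then 1 else 0)"
  shows "tr g A = real CARD('n)"
  unfolding tr_def D by simp




lemma scal2_alg:
  fixes g S :: "'n::finite \<Rightarrow> 'n \<Rightarrow> real"
  assumes gsym: "\<And>i j. g i j = g j i"
  shows "contr g (\<lambda>b c d e. S b d * S c e) = (\<Sum>a\<in>UNIV. \<Sum>b\<in>UNIV. g a b * (\<Sum>c\<in>UNIV. \<Sum>d\<in>UNIV. S a c * g c d * S d b))"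
  unfolding contr_def
proof (intro sum.cong refl)
  fix a b
  have "(\<Sum>d\<in>UNIV. \<Sum>c\<in>UNIV. g d c * (S d b * S a c)) = (\<Sum>c\<in>UNIV. \<Sum>d\<in>UNIV. g d c * (S d b * S a c))"
    by (rule sum.swap)
  also have "\<dots> = (\<Sum>c\<in>UNIV. \<Sum>d\<in>UNIV. S a c * g c d * S d b)"
    by (intro sum.cong refl) (subst gsym, simp add: mult_ac)
  finally have "(\<Sum>d\<in>UNIV. \<Sum>c\<in>UNIV. g d c * (S d b * S a c)) = (\<Sum>c\<in>UNIV. \<Sum>d\<in>UNIV. S a c * g c d * S d b)" .
  then show "g a b * (\<Sum>d\<in>UNIV. \<Sum>c\<in>UNIV. g d c * (S d b * S a c)) = g a b * (\<Sum>c\<in>UNIV. \<Sum>d\<in>UNIV. S a c * g c d * S d b)"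
    by simp
qed

context chart begin

lemma Ric_eq: "Ric G c d = (\<lambda>y. \<Sum>b\<in>UNIV. \<Sum>e\<in>UNIV. ginv G y $ b $ e * Curv G b c d e y)"
  by (rule ext) (simp add: Ric_def)

lemma scal_eq: "scal G = (\<lambda>y. \<Sum>c\<in>UNIV. \<Sum>d\<in>UNIV. ginv G y $ c $ d * Ric G c d y)"
  by (rule ext) (simp add: scal_def)

lemma Ric_diff: "y \<in> U \<Longrightarrow> Ric G c d differentiable at y"
  unfolding Ric_eq
  by (intro differentiable_mult differentiable_sum ballI finite gi_diff Curv_diff)

lemma pd_Ric: assumes y: "y \<in> U"
  shows "pd a (Ric G c d) y = (\<Sum>b\<in>UNIV. \<Sum>e\<in>UNIV. pd a (\<lambda>z. ginv G z $ b $ e) y * Curv G b c d e y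
           + ginv G y $ b $ e * pd a (Curv G b c d e) y)"
proof -
  have "pd a (Ric G c d) y = (\<Sum>b\<in>UNIV. pd a (\<lambda>z. \<Sum>e\<in>UNIV. ginv G z $ b $ e * Curv G b c d e z) y)"
    unfolding Ric_eq
    by (rule pd_sum) (intro differentiable_mult differentiable_sum ballI finite gi_diff Curv_diff y)+
  also have "\<dots> = (\<Sum>b\<in>UNIV. \<Sum>e\<in>UNIV. pd a (\<lambda>z. ginv G z $ b $ e * Curv G b c d e z) y)"
    by (intro sum.cong refl pd_sum finite) (intro differentiable_mult gi_diff Curv_diff y)
  also have "\<dots> = (\<Sum>b\<in>UNIV. \<Sum>e\<in>UNIV. pd a (\<lambda>z. ginv G z $ b $ e) y * Curv G b c d e y
           + ginv G y $ b $ e * pd a (Curv G b c d e) y)"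
    by (intro sum.cong refl pd_mult gi_diff Curv_diff y)
  finally show ?thesis .
qed

lemma pd_scal: assumes y: "y \<in> U"
  shows "pd a (scal G) y = (\<Sum>c\<in>UNIV. \<Sum>d\<in>UNIV. pd a (\<lambda>z. ginv G z $ c $ d) y * Ric G c d y
           + ginv G y $ c $ d * pd a (Ric G c d) y)"
proof -
  have "pd a (scal G) y = (\<Sum>c\<in>UNIV. pd a (\<lambda>z. \<Sum>d\<in>UNIV. ginv G z $ c $ d * Ric G c d z) y)"
    unfolding scal_eq
    by (rule pd_sum) (intro differentiable_mult differentiable_sum ballI finite gi_diff Ric_diff y)+
  also have "\<dots> = (\<Sum>c\<in>UNIV. \<Sum>d\<in>UNIV. pd a (\<lambda>z. ginv G z $ c $ d * Ric G c d z) y)"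
    by (intro sum.cong refl pd_sum finite) (intro differentiable_mult gi_diff Ric_diff y)
  also have "\<dots> = (\<Sum>c\<in>UNIV. \<Sum>d\<in>UNIV. pd a (\<lambda>z. ginv G z $ c $ d) y * Ric G c d y
           + ginv G y $ c $ d * pd a (Ric G c d) y)"
    by (intro sum.cong refl pd_mult gi_diff Ric_diff y)
  finally show ?thesis .
qed


lemma contr_covR: assumes x: "x \<in> U"
  shows "contr (\<lambda>i j. ginv G x $ i $ j) (\<lambda>b c d e. covR G a b c d e x) = pd a (scal G) x"
proof -
  define g where "g i j = ginv G x $ i $ j" for i j
  define D where "D i j = pd a (\<lambda>z. ginv G z $ i $ j) x" for i j
  define K where "K i j = chr G i a j x" for i j
  define T where "T b c d e = Curv G b c d e x" for b c d e
  define P where "P b c d e = pd a (Curv G b c d e) x" for b c d e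
  have gfun: "(\<lambda>i j. ginv G x $ i $ j) = g" unfolding g_def by (intro ext) simp
  have hD: "D b e = - (\<Sum>p\<in>UNIV. g p e * K b p + g b p * K e p)" for b e
    unfolding D_def g_def K_def by (rule H[OF x])
  define Y1 where "Y1 b c d e = (\<Sum>p\<in>UNIV. K p b * T p c d e + K p e * T b c d p)" for b c d e
  define Y2 where "Y2 b c d e = (\<Sum>p\<in>UNIV. K p c * T b p d e + K p d * T b c p e)" for b c d e
  have cov: "(\<lambda>b c d e. covR G a b c d e x) = (\<lambda>b c d e. (P b c d e - Y1 b c d e) - Y2 b c d e)"
    unfolding covR_def P_def Y1_def Y2_def K_def T_def sum.distrib by (intro ext) linarith
  have cY1: "contr g Y1 = (\<Sum>c\<in>UNIV. \<Sum>d\<in>UNIV. g c d * (\<Sum>b\<in>UNIV. \<Sum>e\<in>UNIV. (- D b e) * T b c d e))"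
    unfolding contr_def
  proof (intro sum.cong refl)
    fix c d
    have "(\<Sum>b\<in>UNIV. \<Sum>e\<in>UNIV. g b e * Y1 b c d e) = (\<Sum>b\<in>UNIV. \<Sum>e\<in>UNIV. (- D b e) * T b c d e)"
      unfolding Y1_def hD minus_minus using Q[of g K "\<lambda>p e. T p c d e"] by simp
    then show "g c d * (\<Sum>b\<in>UNIV. \<Sum>e\<in>UNIV. g b e * Y1 b c d e) = g c d * (\<Sum>b\<in>UNIV. \<Sum>e\<in>UNIV. (- D b e) * T b c d e)"
      by simp
  qed
  have "contr g Y2 = (\<Sum>b\<in>UNIV. \<Sum>e\<in>UNIV. g b e * (\<Sum>c\<in>UNIV. \<Sum>d\<in>UNIV. g c d * Y2 b c d e))"
    unfolding contr_def by (rule contr_swap)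
  also have "\<dots> = (\<Sum>b\<in>UNIV. \<Sum>e\<in>UNIV. g b e * (\<Sum>c\<in>UNIV. \<Sum>d\<in>UNIV. (- D c d) * T b c d e))"
  proof (intro sum.cong refl)
    fix b e
    have "(\<Sum>c\<in>UNIV. \<Sum>d\<in>UNIV. g c d * Y2 b c d e) = (\<Sum>c\<in>UNIV. \<Sum>d\<in>UNIV. (- D c d) * T b c d e)"
      unfolding Y2_def hD minus_minus using Q[of g K "\<lambda>c d. T b c d e"] by simp
    then show "g b e * (\<Sum>c\<in>UNIV. \<Sum>d\<in>UNIV. g c d * Y2 b c d e) = g b e * (\<Sum>c\<in>UNIV. \<Sum>d\<in>UNIV. (- D c d) * T b c d e)"
      by simp
  qed
  finally have cY2: "contr g Y2 = (\<Sum>b\<in>UNIV. \<Sum>e\<in>UNIV. g b e * (\<Sum>c\<in>UNIV. \<Sum>d\<in>UNIV. (- D c d) * T b c d e))" .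
  have Ric_x: "Ric G c d x = (\<Sum>b\<in>UNIV. \<Sum>e\<in>UNIV. g b e * T b c d e)" for c d
    unfolding Ric_def g_def T_def by simp
  have ps: "pd a (scal G) x = (\<Sum>c\<in>UNIV. \<Sum>d\<in>UNIV. D c d * (\<Sum>b\<in>UNIV. \<Sum>e\<in>UNIV. g b e * T b c d e))
      + (\<Sum>c\<in>UNIV. \<Sum>d\<in>UNIV. g c d * (\<Sum>b\<in>UNIV. \<Sum>e\<in>UNIV. D b e * T b c d e))
      + contr g P"
    unfolding pd_scal[OF x] pd_Ric[OF x] contr_def
    unfolding D_def[symmetric] g_def[symmetric] T_def[symmetric] P_def[symmetric] Ric_x
    by (simp add: sum.distrib distrib_left)
  have sw: "(\<Sum>c\<in>UNIV. \<Sum>d\<in>UNIV. D c d * (\<Sum>b\<in>UNIV. \<Sum>e\<in>UNIV. g b e * T b c d e))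
     = (\<Sum>b\<in>UNIV. \<Sum>e\<in>UNIV. g b e * (\<Sum>c\<in>UNIV. \<Sum>d\<in>UNIV. D c d * T b c d e))"
    by (rule contr_swap)
  have "contr g (\<lambda>b c d e. covR G a b c d e x) = contr g P - contr g Y1 - contr g Y2"
    unfolding cov contr_diff ..
  also have "\<dots> = pd a (scal G) x"
    unfolding ps cY1 cY2 sw by (simp add: sum_negf)
  finally show ?thesis unfolding gfun .
qed

end



theorem theorem3p2:
  fixes G :: "real^'n::finite \<Rightarrow> real^'n^'n" and U :: "(real^'n) set"
    and Pi Phi Psi Theta :: "real^'n \<Rightarrow> 'n \<Rightarrow> real"
  assumes "CARD('n) \<ge> 3" and "open U" and "connected U"
    and "semi_riemannian_metric U G"
    and "\<forall>x\<in>U. \<forall>a b c d e. covR G a b c d e x =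
            Pi x a * Curv G b c d e x
          + Phi x a * kulkarni (\<lambda>i j. Ric G i j x) (\<lambda>i j. Ric G i j x) b c d e
          + Psi x a * kulkarni (\<lambda>i j. G x $ i $ j) (\<lambda>i j. Ric G i j x) b c d e
          + Theta x a * kulkarni (\<lambda>i j. G x $ i $ j) (\<lambda>i j. G x $ i $ j) b c d e"
  shows "\<forall>x\<in>U. \<forall>a. pd a (scal G) x =
            scal G x * Pi x a + 2 * ((scal G x)^2 - scal2 G x) * Phi x a
          + 2 * (real CARD('n) - 1) * (scal G x * Psi x a + real CARD('n) * Theta x a)"
proof (intro ballI allI)
  fix x a assume x: "x \<in> U"
  interpret chart U G using assms(2,4) by unfold_locales
  define g where "g i j = ginv G x $ i $ j" for i j
  define S where "S i j = Ric G i j x" for i j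
  define M where "M i j = G x $ i $ j" for i j
  define n where "n = real CARD('n)"
  have gfun: "(\<lambda>i j. ginv G x $ i $ j) = g" unfolding g_def by (intro ext) simp
  have Sfun: "(\<lambda>i j. Ric G i j x) = S" unfolding S_def by (intro ext) simp
  have Mfun: "(\<lambda>i j. G x $ i $ j) = M" unfolding M_def by (intro ext) simp
  have gsym: "g i j = g j i" for i j unfolding g_def by (rule gi_sym[OF x])
  have D1: "(\<Sum>d\<in>UNIV. g c d * M b d) = (if c = b then 1 else 0)" for c b
  proof -
    have "(\<Sum>d\<in>UNIV. g c d * M b d) = (\<Sum>d\<in>UNIV. ginv G x $ c $ d * G x $ d $ b)"
      unfolding g_def M_def by (intro sum.cong refl) (simp add: Gsym[OF x, of b])
    then show ?thesis using E1[OF x] by simp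
  qed
  have D2: "(\<Sum>e\<in>UNIV. g b e * M c e) = (if b = c then 1 else 0)" for c b
    using D1 .
  have trM: "tr g M = n" unfolding n_def by (rule tr_delta[OF D1])
  have trS: "tr g S = scal G x" unfolding tr_def g_def S_def scal_def by simp
  have cCurv: "contr g (\<lambda>b c d e. Curv G b c d e x) = scal G x"
    unfolding contr_def g_def scal_def Ric_def by simp
  have m1S: "contr g (\<lambda>b c d e. S b d * S c e) = scal2 G x"
    unfolding scal2_alg[of g, OF gsym] scal2_def Ric2_def g_def S_def by simp
  have m2S: "contr g (\<lambda>b c d e. S c e * S b d) = scal2 G x"
    using m1S by (simp add: mult.commute)
  have kSS: "contr g (kulkarni S S) = 2 * (scal G x)^2 - 2 * scal2 G x"
    unfolding contr_kulk m1S m2S trS by (simp add: power2_eq_square)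
  have kMS: "contr g (kulkarni M S) = 2 * n * scal G x - 2 * scal G x"
    unfolding contr_kulk M1_delta[of g M, OF D1] M2_delta[of g M, OF D2] trS trM by simp
  have kMM: "contr g (kulkarni M M) = 2 * n * n - 2 * n"
    unfolding contr_kulk M1_delta[of g M, OF D1] M2_delta[of g M, OF D2] trM by simp
  have cov: "(\<lambda>b c d e. covR G a b c d e x) = (\<lambda>b c d e. Pi x a * Curv G b c d e x
          + Phi x a * kulkarni S S b c d e + Psi x a * kulkarni M S b c d e
          + Theta x a * kulkarni M M b c d e)"
    unfolding Sfun[symmetric] Mfun[symmetric] using assms(5) x by (intro ext) blast
  have "pd a (scal G) x = contr g (\<lambda>b c d e. covR G a b c d e x)"
    using contr_covR[OF x, of a] unfolding gfun by simp
  also have "\<dots> = Pi x a * scal G x + Phi x a * (2 * (scal G x)^2 - 2 * scal2 G x)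
      + Psi x a * (2 * n * scal G x - 2 * scal G x) + Theta x a * (2 * n * n - 2 * n)"
    unfolding cov contr_add contr_scale cCurv kSS kMS kMM ..
  finally show "pd a (scal G) x =
            scal G x * Pi x a + 2 * ((scal G x)^2 - scal2 G x) * Phi x a
          + 2 * (real CARD('n) - 1) * (scal G x * Psi x a + real CARD('n) * Theta x a)"
    unfolding n_def[symmetric] by (simp add: algebra_simps)
qed


end
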